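(* If $f_N\in H_N^{\mathrm{sip}}$ converges weakly to $f\in H^{\mathrm{sbm}}$ with respect to the Hilbert space convergence $H_N^{\mathrm{sip}}\to H^{\mathrm{sbm}}$, then $\lim_{N\to\infty}f_N(0)=f(0)$.
   Context: $\gamma>0$; $\mu_N$ gives mass $\frac1N$ to each point of $\frac1N\mathbb Z$; $\nu_{\gamma,N}=\mu_N+\sqrt2\gamma\delta_0$; $H_N^{\mathrm{sip}}=L^2(\frac1N\mathbb Z,\nu_{\gamma,N})$; $H^{\mathrm{sbm}}=L^2(\mathbb R,dx+\sqrt2\gamma\delta_0)$ (so $f(0)$ is well defined for $f\in H^{\mathrm{sbm}}$). Hilbert convergence is witnessed by $C=\{f+\lambda\mathbf 1_{\{0\}}:f\in C_c^\infty(\mathbb R),\lambda\in\mathbb R\}$ and $\Phi_Nf=f|_{\frac1N\mathbb Z}$. Strong convergence $g_N\to g$: there exist $\tilde g_M\in C$ with $\|\tilde g_M-g\|_{H^{\mathrm{sbm}}}\to0$ and $\lim_M\limsup_N\|\Phi_N\tilde g_M-g_N\|_{H_N^{\mathrm{sip}}}=0$. Weak convergence $f_N\to f$: $\langle f_N,g_N\rangle_{H_N^{\mathrm{sip}}}\to\langle f,g\rangle_{H^{\mathrm{sbm}}}$ for every strongly convergent $g_N\to g$. *)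

theory Defs
  imports "HOL-Analysis.Analysis"
begin

definition smooth_real :: "(real \<Rightarrow> real) \<Rightarrow> bool" where
  "smooth_real f \<longleftrightarrow> (\<forall>n x. ((deriv ^^ n) f) differentiable (at x))"

definition Cc_infty :: "(real \<Rightarrow> real) set" where
  "Cc_infty = {f. smooth_real f \<and> compact (closure {x. f x \<noteq> 0})}"

definition core_C :: "(real \<Rightarrow> real) set" where
  "core_C = {(\<lambda>x. f x + c * indicator {0} x) | f c. f \<in> Cc_infty}"

(* H^sbm = L^2(R, dx + sqrt 2 \<gamma> \<delta>_0), elements represented by functions real \<Rightarrow> real *)
definition in_Hsbm :: "(real \<Rightarrow> real) \<Rightarrow> bool" where
  "in_Hsbm f \<longleftrightarrow> f \<in> borel_measurable lborel \<and> integrable lborel (\<lambda>x. (f x)\<^sup>2)"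

definition sbm_inner :: "real \<Rightarrow> (real \<Rightarrow> real) \<Rightarrow> (real \<Rightarrow> real) \<Rightarrow> real" where
  "sbm_inner \<gamma> f g = (\<integral>x. f x * g x \<partial>lborel) + sqrt 2 * \<gamma> * f 0 * g 0"

definition sbm_norm :: "real \<Rightarrow> (real \<Rightarrow> real) \<Rightarrow> real" where
  "sbm_norm \<gamma> f = sqrt (sbm_inner \<gamma> f f)"

(* H_N^sip = L^2((1/N)Z, \<mu>_N + sqrt 2 \<gamma> \<delta>_0); a function g on (1/N)Z is represented
   by k \<mapsto> g(k/N), so the value at the point 0 is g 0 *)
definition in_Hsip :: "(int \<Rightarrow> real) \<Rightarrow> bool" where
  "in_Hsip g \<longleftrightarrow> (\<lambda>k. (g k)\<^sup>2) summable_on UNIV"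

definition sip_inner :: "real \<Rightarrow> nat \<Rightarrow> (int \<Rightarrow> real) \<Rightarrow> (int \<Rightarrow> real) \<Rightarrow> real" where
  "sip_inner \<gamma> N f g = (1 / real N) * (\<Sum>\<^sub>\<infinity>k\<in>UNIV. f k * g k) + sqrt 2 * \<gamma> * f 0 * g 0"

definition sip_norm :: "real \<Rightarrow> nat \<Rightarrow> (int \<Rightarrow> real) \<Rightarrow> real" where
  "sip_norm \<gamma> N g = sqrt (sip_inner \<gamma> N g g)"

definition Phi :: "nat \<Rightarrow> (real \<Rightarrow> real) \<Rightarrow> (int \<Rightarrow> real)" where
  "Phi N f = (\<lambda>k. f (real_of_int k / real N))"

definition strong_conv :: "real \<Rightarrow> (nat \<Rightarrow> int \<Rightarrow> real) \<Rightarrow> (real \<Rightarrow> real) \<Rightarrow> bool" where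
  "strong_conv \<gamma> gs g \<longleftrightarrow> (\<forall>N. in_Hsip (gs N)) \<and> in_Hsbm g \<and>
     (\<exists>gt :: nat \<Rightarrow> real \<Rightarrow> real. (\<forall>M. gt M \<in> core_C) \<and>
        (\<lambda>M. sbm_norm \<gamma> (\<lambda>x. gt M x - g x)) \<longlonglongrightarrow> 0 \<and>
        (\<lambda>M. limsup (\<lambda>N. ereal (sip_norm \<gamma> N (\<lambda>k. Phi N (gt M) k - gs N k)))) \<longlonglongrightarrow> 0)"

definition weak_conv :: "real \<Rightarrow> (nat \<Rightarrow> int \<Rightarrow> real) \<Rightarrow> (real \<Rightarrow> real) \<Rightarrow> bool" where
  "weak_conv \<gamma> fs f \<longleftrightarrow> (\<forall>gs g. strong_conv \<gamma> gs g \<longrightarrow>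
     (\<lambda>N. sip_inner \<gamma> N (fs N) (gs N)) \<longlonglongrightarrow> sbm_inner \<gamma> f g)"

end

theory Submission
  imports Defs
begin

lemma deriv_zero_iter: "(deriv ^^ n) (\<lambda>x::real. 0) = (\<lambda>x. 0)"
proof (induction n)
  case 0 then show ?case by simp
next
  case (Suc n)
  have "deriv (\<lambda>x::real. 0::real) = (\<lambda>x. 0)"
    by (rule ext, rule DERIV_imp_deriv, simp)
  then show ?case using Suc by simp
qed

lemma zero_Cc: "(\<lambda>x::real. 0::real) \<in> Cc_infty"
  unfolding Cc_infty_def smooth_real_def by (simp add: deriv_zero_iter)

definition ind0 :: "real \<Rightarrow> real" where "ind0 = (\<lambda>x. 0 + 1 * indicator {0} x)"
definition d0 :: "int \<Rightarrow> real" where "d0 = (\<lambda>k. if k = 0 then 1 else 0)"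

lemma ind0_core: "ind0 \<in> core_C"
  unfolding core_C_def ind0_def using zero_Cc by (intro CollectI exI[of _ "\<lambda>x. 0"] exI[of _ 1]) auto

lemma ind0_simp: "ind0 x = (if x = 0 then 1 else 0)"
  by (simp add: ind0_def indicator_def)

lemma d0_Hsip: "in_Hsip d0"
proof -
  have "(\<lambda>k. (d0 k)\<^sup>2) summable_on {0}" by simp
  moreover have "\<And>k. k \<notin> {0} \<Longrightarrow> (d0 k)\<^sup>2 = 0" by (simp add: d0_def)
  ultimately show ?thesis unfolding in_Hsip_def
    using summable_on_cong_neutral[of "{0}" UNIV "\<lambda>k. (d0 k)\<^sup>2"] by auto
qed

lemma infsum_d0: "(\<Sum>\<^sub>\<infinity>k\<in>UNIV. g k * d0 k) = g 0"
proof -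
  have "(\<Sum>\<^sub>\<infinity>k\<in>UNIV. g k * d0 k) = (\<Sum>\<^sub>\<infinity>k\<in>{0}. g k * d0 k)"
    by (rule infsum_cong_neutral) (auto simp: d0_def)
  also have "\<dots> = g 0" by (simp add: d0_def)
  finally show ?thesis .
qed

lemma ind0_Hsbm: "in_Hsbm ind0"
proof -
  have e: "ind0 = indicator {0}" by (rule ext) (simp add: ind0_simp indicator_def)
  have "integrable lborel (\<lambda>x. (indicator {0::real} x :: real)\<^sup>2)"
  proof -
    have "(\<lambda>x. (indicator {0::real} x :: real)\<^sup>2) = indicator {0}"
      by (rule ext) (simp add: indicator_def)
    then show ?thesis by simp
  qed
  then show ?thesis unfolding in_Hsbm_def e by simp
qed

lemma strong_d0: "strong_conv \<gamma> (\<lambda>N. d0) ind0"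
  unfolding strong_conv_def
proof (intro conjI allI exI[of _ "\<lambda>M. ind0"])
  show "in_Hsip d0" for N by (rule d0_Hsip)
  show "in_Hsbm ind0" by (rule ind0_Hsbm)
  show "ind0 \<in> core_C" for M by (rule ind0_core)
  show "(\<lambda>M. sbm_norm \<gamma> (\<lambda>x. ind0 x - ind0 x)) \<longlonglongrightarrow> 0"
    by (simp add: sbm_norm_def sbm_inner_def)
  have ev: "eventually (\<lambda>N. ereal (sip_norm \<gamma> N (\<lambda>k. Phi N ind0 k - d0 k)) = 0) sequentially"
  proof (rule eventually_sequentiallyI[of 1])
    fix N :: nat assume "N \<ge> 1"
    then have "(\<lambda>k. Phi N ind0 k - d0 k) = (\<lambda>k. 0)"
      by (auto simp: Phi_def ind0_simp d0_def)
    then show "ereal (sip_norm \<gamma> N (\<lambda>k. Phi N ind0 k - d0 k)) = 0"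
      by (simp add: sip_norm_def sip_inner_def)
  qed
  have "limsup (\<lambda>N. ereal (sip_norm \<gamma> N (\<lambda>k. Phi N ind0 k - d0 k))) = 0"
  proof -
    have "(\<lambda>N. ereal (sip_norm \<gamma> N (\<lambda>k. Phi N ind0 k - d0 k))) \<longlonglongrightarrow> 0"
      using ev by (rule tendsto_eventually)
    then show ?thesis by (simp add: lim_imp_Limsup)
  qed
  then show "(\<lambda>M. limsup (\<lambda>N. ereal (sip_norm \<gamma> N (\<lambda>k. Phi N ind0 k - d0 k)))) \<longlonglongrightarrow> 0"
    by simp
qed

theorem proposition5p9:
  fixes \<gamma> :: real and fs :: "nat \<Rightarrow> int \<Rightarrow> real" and f :: "real \<Rightarrow> real"
  assumes "\<gamma> > 0"
    and "\<And>N. in_Hsip (fs N)"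
    and "in_Hsbm f"
    and "weak_conv \<gamma> fs f"
  shows "(\<lambda>N. fs N 0) \<longlonglongrightarrow> f 0"
proof -
  define c where "c = sqrt 2 * \<gamma>"
  have c: "c > 0" using assms(1) by (simp add: c_def)
  have lim: "(\<lambda>N. sip_inner \<gamma> N (fs N) d0) \<longlonglongrightarrow> sbm_inner \<gamma> f ind0"
    using assms(4) strong_d0 unfolding weak_conv_def by blast
  have i0: "(\<integral>x. f x * ind0 x \<partial>lborel) = 0"
  proof -
    have "AE x in lborel. f x * ind0 x = 0"
    proof -
      have "AE x in lborel. x \<noteq> (0::real)" by (rule AE_lborel_singleton)
      then show ?thesis by eventually_elim (simp add: ind0_simp)
    qed
    then show ?thesis by (rule integral_eq_zero_AE)
  qed
  have r: "sbm_inner \<gamma> f ind0 = c * f 0"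
    unfolding sbm_inner_def i0 c_def by (simp add: ind0_simp)
  have l: "sip_inner \<gamma> N (fs N) d0 = (1 / real N + c) * fs N 0" for N
    unfolding sip_inner_def infsum_d0 c_def by (simp add: d0_def algebra_simps)
  have lim2: "(\<lambda>N. (1 / real N + c) * fs N 0) \<longlonglongrightarrow> c * f 0"
    using lim unfolding l r .
  have den: "(\<lambda>N. 1 / real N + c) \<longlonglongrightarrow> 0 + c"
    by (intro tendsto_add lim_1_over_n tendsto_const)
  have q: "(\<lambda>N. ((1 / real N + c) * fs N 0) / (1 / real N + c)) \<longlonglongrightarrow> (c * f 0) / (0 + c)"
    using c by (intro tendsto_divide lim2 den) auto
  have e: "((1 / real N + c) * fs N 0) / (1 / real N + c) = fs N 0" for N
  proof -
    have "1 / real N + c > 0" using c by (simp add: add_nonneg_pos)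
    then show ?thesis by simp
  qed
  show ?thesis using q c unfolding e by simp
qed

end
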